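(* Let $f_1,\dots,f_n:\mathbb{R}^d\to\mathbb{R}$ be continuously differentiable, where $f_i$ has ${\bm L}_i$-Lipschitz gradient with ${\bm L}_i\in\mathbb{S}^d_{++}$, and $f=\frac1n\sum_i f_i$. If ${\bm L}\in\mathbb{S}^d_{++}$ satisfies $${\bm L}\,\lambda_{\min}({\bm L})=\frac1n\sum_{i=1}^n\lambda_{\max}({\bm L}_i)\,{\bm L}_i,$$ then $f$ has ${\bm L}$-Lipschitz gradient.
   Context: $\mathbb{S}^d_{++}$: symmetric positive definite matrices; $\|x\|_{\bm M}^2:=x^\top{\bm M}x$; $\lambda_{\max},\lambda_{\min}$: largest/smallest eigenvalue. A differentiable $g$ has ${\bm L}$-Lipschitz gradient if $\|\nabla g(x)-\nabla g(y)\|_{{\bm L}^{-1}}\le\|x-y\|_{\bm L}$ for all $x,y\in\mathbb{R}^d$. *)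

theory Defs
  imports "HOL-Analysis.Analysis"
begin

definition sym_pd :: "real^'n^'n \<Rightarrow> bool" where
  "sym_pd A \<longleftrightarrow> transpose A = A \<and> (\<forall>x. x \<noteq> 0 \<longrightarrow> x \<bullet> (A *v x) > 0)"

definition mnorm :: "real^'n^'n \<Rightarrow> real^'n \<Rightarrow> real" where
  "mnorm M x = sqrt (x \<bullet> (M *v x))"

definition eigvals :: "real^'n^'n \<Rightarrow> real set" where
  "eigvals A = {c. \<exists>v. v \<noteq> 0 \<and> A *v v = c *\<^sub>R v}"

definition lambda_max :: "real^'n^'n \<Rightarrow> real" where
  "lambda_max A = Max (eigvals A)"

definition lambda_min :: "real^'n^'n \<Rightarrow> real" where
  "lambda_min A = Min (eigvals A)"

definition cont_diff1 :: "(real^'n \<Rightarrow> real) \<Rightarrow> bool" where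
  "cont_diff1 g \<longleftrightarrow> (\<exists>G. continuous_on UNIV G \<and>
      (\<forall>x. (g has_derivative (\<lambda>h. G x \<bullet> h)) (at x)))"

definition lipschitz_gradient :: "real^'n^'n \<Rightarrow> (real^'n \<Rightarrow> real) \<Rightarrow> bool" where
  "lipschitz_gradient L g \<longleftrightarrow> (\<exists>G. (\<forall>x. (g has_derivative (\<lambda>h. G x \<bullet> h)) (at x)) \<and>
      (\<forall>x y. mnorm (matrix_inv L) (G x - G y) \<le> mnorm L (x - y)))"

end

theory Submission
  imports Defs
begin

lemma sym_inner:
  fixes A :: "real^'n^'n"
  assumes "transpose A = A"
  shows "x \<bullet> (A *v y) = y \<bullet> (A *v x)"
proof -
  have "x \<bullet> (A *v y) = (x v* A) \<bullet> y" by (simp add: dot_lmul_matrix)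
  also have "x v* A = transpose A *v x" by (simp add: transpose_matrix_vector)
  finally show ?thesis using assms by (simp add: inner_commute)
qed

lemma quad_expand:
  fixes A :: "real^'n^'n"
  shows "(v + t *\<^sub>R w) \<bullet> (A *v (v + t *\<^sub>R w)) =
    v \<bullet> (A *v v) + t * (v \<bullet> (A *v w)) + t * (w \<bullet> (A *v v)) + t^2 * (w \<bullet> (A *v w))"
  by (simp add: matrix_vector_right_distrib matrix_vector_mult_scaleR inner_add_left
      inner_add_right power2_eq_square algebra_simps)

lemma rayleigh_max:
  fixes A :: "real^'n^'n"
  assumes sym: "transpose A = A"
  shows "\<exists>\<mu> v. v \<noteq> 0 \<and> A *v v = \<mu> *\<^sub>R v \<and> (\<forall>x. x \<bullet> (A *v x) \<le> \<mu> * (x \<bullet> x))"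
proof -
  have "\<exists>x\<in>sphere 0 1. \<forall>y\<in>sphere 0 1. y \<bullet> (A *v y) \<le> x \<bullet> (A *v x)"
    by (rule continuous_attains_sup)
       (auto intro!: continuous_on_inner[OF continuous_on_id linear_continuous_on[OF matrix_vector_mul_bounded_linear]])
  then obtain v where v1: "norm v = 1" and vmax: "\<And>y. norm y = 1 \<Longrightarrow> y \<bullet> (A *v y) \<le> v \<bullet> (A *v v)"
    by auto
  define \<mu> where "\<mu> = v \<bullet> (A *v v)"
  have vv: "v \<bullet> v = 1" using v1 by (simp add: norm_eq_sqrt_inner)
  have ray: "x \<bullet> (A *v x) \<le> \<mu> * (x \<bullet> x)" for x
  proof (cases "x = 0")
    case True then show ?thesis by simp
  next
    case False
    define y where "y = (1 / norm x) *\<^sub>R x"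
    have "norm y = 1" using False by (simp add: y_def)
    then have "y \<bullet> (A *v y) \<le> \<mu>" using vmax \<mu>_def by auto
    moreover have "y \<bullet> (A *v y) = (x \<bullet> (A *v x)) / (norm x)^2"
      by (simp add: y_def matrix_vector_mult_scaleR power2_eq_square)
    moreover have "x \<bullet> x = (norm x)^2" by (simp add: power2_norm_eq_inner)
    moreover have "(norm x)^2 > 0" using False by simp
    ultimately show ?thesis by (simp add: divide_le_eq mult.commute)
  qed
  define w where "w = \<mu> *\<^sub>R v - A *v v"
  have "w = 0"
  proof (rule ccontr)
    assume wne: "w \<noteq> 0"
    define B where "B = A"
    define f where "f z = \<mu> * (z \<bullet> z) - z \<bullet> (A *v z)" for z
    have fpos: "f z \<ge> 0" for z using ray[of z] by (simp add: f_def)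
    have fexp: "f (v + t *\<^sub>R w) = 2 * t * (w \<bullet> w) + t^2 * f w" for t
    proof -
      have s: "v \<bullet> (A *v w) = w \<bullet> (A *v v)" by (rule sym_inner[OF sym])
      have fv: "f v = 0" by (simp add: f_def vv \<mu>_def inner_commute)
      have "w \<bullet> w = \<mu> * (v \<bullet> w) - w \<bullet> (A *v v)"
        by (simp add: w_def inner_diff_left inner_diff_right vv inner_commute \<mu>_def)
      then have H2: "t*(w \<bullet> w) + t*(w \<bullet> (A *v v)) = t*(\<mu>*(v \<bullet> w))"
        by (simp only: distrib_left[symmetric]) simp
      show ?thesis
        using quad_expand[of v t w A] fv s H2
        by (simp add: f_def inner_add_left inner_add_right power2_eq_square algebra_simps inner_commute)
    qed
    define a where "a = w \<bullet> w"
    define c where "c = f w"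
    have a0: "a > 0" using wne by (simp add: a_def)
    have c0: "c \<ge> 0" using fpos by (simp add: c_def)
    define t where "t = - a / (c + 1)"
    have "0 \<le> 2 * t * a + t^2 * c" using fpos[of "v + t *\<^sub>R w"] fexp[of t] by (simp add: a_def c_def)
    moreover have "2 * t * a + t^2 * c = a^2 * (- c - 2) / (c + 1)^2"
      using c0 by (simp add: t_def divide_simps power2_eq_square) (simp add: algebra_simps)
    moreover have "a^2 * (- c - 2) / (c + 1)^2 < 0"
      using a0 c0 by (intro divide_neg_pos mult_pos_neg) auto
    ultimately show False by linarith
  qed
  then have "A *v v = \<mu> *\<^sub>R v" by (simp add: w_def)
  moreover have "v \<noteq> 0" using v1 by auto
  ultimately show ?thesis using ray by blast
qed


lemma eig_finite:
  fixes A :: "real^'n^'n"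
  assumes sym: "transpose A = A"
  shows "finite (eigvals A)"
proof -
  define e where "e c = (SOME v. v \<noteq> 0 \<and> A *v v = c *\<^sub>R v)" for c
  have e: "e c \<noteq> 0 \<and> A *v e c = c *\<^sub>R e c" if "c \<in> eigvals A" for c
  proof -
    from that obtain v where "v \<noteq> 0 \<and> A *v v = c *\<^sub>R v" unfolding eigvals_def by blast
    then show ?thesis unfolding e_def by (rule someI)
  qed
  have inj: "inj_on e (eigvals A)"
  proof (rule inj_onI)
    fix c d assume c: "c \<in> eigvals A" and d: "d \<in> eigvals A" and eq: "e c = e d"
    have "c *\<^sub>R e c = A *v e c" by (rule HOL.sym[OF conjunct2[OF e[OF c]]])
    also have "\<dots> = A *v e d" by (simp only: eq)
    also have "\<dots> = d *\<^sub>R e d" using e[OF d] by (rule conjunct2)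
    also have "\<dots> = d *\<^sub>R e c" by (simp only: eq)
    finally have "c *\<^sub>R e c = d *\<^sub>R e c" .
    then show "c = d" using e[OF c] scaleR_cancel_right by blast
  qed
  have po: "pairwise orthogonal (e ` eigvals A)"
    unfolding pairwise_def orthogonal_def
  proof (intro ballI impI)
    fix p q assume p: "p \<in> e ` eigvals A" and q: "q \<in> e ` eigvals A" and ne: "p \<noteq> q"
    from p obtain c where c: "c \<in> eigvals A" and pc: "p = e c" by blast
    from q obtain d where d: "d \<in> eigvals A" and qd: "q = e d" by blast
    have cd: "c \<noteq> d" using ne pc qd by blast
    have "c * (e c \<bullet> e d) = (A *v e c) \<bullet> e d" using e[OF c] by simp
    also have "\<dots> = e d \<bullet> (A *v e c)" by (simp add: inner_commute)
    also have "\<dots> = e c \<bullet> (A *v e d)" by (rule sym_inner[OF sym])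
    also have "\<dots> = d * (e c \<bullet> e d)" using e[OF d] by simp
    finally have "(c - d) * (e c \<bullet> e d) = 0" by (simp add: algebra_simps)
    then show "p \<bullet> q = 0" using cd pc qd by simp
  qed
  have "0 \<notin> e ` eigvals A"
  proof
    assume "0 \<in> e ` eigvals A"
    then obtain c where "c \<in> eigvals A" "e c = 0" by (metis image_iff)
    then show False using e by blast
  qed
  then have "independent (e ` eigvals A)" using po pairwise_orthogonal_independent by blast
  then have "finite (e ` eigvals A)" by (rule independent_imp_finite)
  then show ?thesis using inj by (rule finite_imageD)
qed

lemma lmax:
  fixes A :: "real^'n^'n"
  assumes sym: "transpose A = A"
  shows "lambda_max A \<in> eigvals A \<and> (\<forall>x. x \<bullet> (A *v x) \<le> lambda_max A * (x \<bullet> x))"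
proof -
  obtain \<mu> v where v: "v \<noteq> 0" "A *v v = \<mu> *\<^sub>R v" and ray: "\<And>x. x \<bullet> (A *v x) \<le> \<mu> * (x \<bullet> x)"
    using rayleigh_max[OF sym] by blast
  have mem: "\<mu> \<in> eigvals A" using v unfolding eigvals_def by blast
  have "c \<le> \<mu>" if "c \<in> eigvals A" for c
  proof -
    from that obtain u where u: "u \<noteq> 0" "A *v u = c *\<^sub>R u" unfolding eigvals_def by blast
    have "c * (u \<bullet> u) \<le> \<mu> * (u \<bullet> u)" using ray[of u] u by simp
    moreover have "u \<bullet> u > 0" using u by simp
    ultimately show ?thesis by simp
  qed
  then have "lambda_max A = \<mu>" unfolding lambda_max_def
    using mem eig_finite[OF sym] by (intro Max_eqI) auto
  then show ?thesis using mem ray by simp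
qed

lemma lmin:
  fixes A :: "real^'n^'n"
  assumes sym: "transpose A = A"
  shows "lambda_min A \<in> eigvals A \<and> (\<forall>x. lambda_min A * (x \<bullet> x) \<le> x \<bullet> (A *v x))"
proof -
  have sym': "transpose (- A) = - A" using sym transpose_scalar[of "-1" A] by simp
  obtain \<nu> v where v: "v \<noteq> 0" "(- A) *v v = \<nu> *\<^sub>R v" and ray: "\<And>x. x \<bullet> ((- A) *v x) \<le> \<nu> * (x \<bullet> x)"
    using rayleigh_max[OF sym'] by blast
  have neg: "(- A) *v x = - (A *v x)" for x by (simp add: matrix_vector_mult_def vec_eq_iff sum_negf)
  have v2: "A *v v = (- \<nu>) *\<^sub>R v" using v(2) neg[of v] by (metis minus_minus scaleR_minus_left)
  have ray2: "(- \<nu>) * (x \<bullet> x) \<le> x \<bullet> (A *v x)" for x using ray[of x] neg[of x] by simp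
  have mem: "- \<nu> \<in> eigvals A" using v(1) v2 unfolding eigvals_def by blast
  have "- \<nu> \<le> c" if "c \<in> eigvals A" for c
  proof -
    from that obtain u where u: "u \<noteq> 0" "A *v u = c *\<^sub>R u" unfolding eigvals_def by blast
    have "(- \<nu>) * (u \<bullet> u) \<le> c * (u \<bullet> u)" using ray2[of u] u by simp
    moreover have "u \<bullet> u > 0" using u by simp
    ultimately show ?thesis by (metis mult_le_cancel_right_pos)
  qed
  then have "lambda_min A = - \<nu>" unfolding lambda_min_def
    using mem eig_finite[OF sym] by (intro Min_eqI) auto
  then show ?thesis using mem ray2 by simp
qed


lemma pd_inv:
  fixes A :: "real^'n^'n"
  assumes "sym_pd A"
  shows "A *v (matrix_inv A *v v) = v"
proof -
  have "\<forall>x. A *v x = 0 \<longrightarrow> x = 0"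
  proof (intro allI impI)
    fix x assume "A *v x = 0"
    then have "x \<bullet> (A *v x) = 0" by simp
    then show "x = 0" using assms unfolding sym_pd_def by force
  qed
  then have "\<exists>B. B ** A = mat 1" using matrix_left_invertible_ker by blast
  then have "invertible A" using invertible_left_inverse by blast
  then have "\<exists>A'. A ** A' = mat 1 \<and> A' ** A = mat 1" unfolding invertible_def by blast
  then have "A ** matrix_inv A = mat 1 \<and> matrix_inv A ** A = mat 1"
    unfolding matrix_inv_def by (rule someI_ex)
  then show ?thesis by (simp add: matrix_vector_mul_assoc)
qed

lemma lmax_pos:
  fixes A :: "real^'n^'n"
  assumes "sym_pd A"
  shows "lambda_max A > 0"
proof -
  have sym: "transpose A = A" using assms unfolding sym_pd_def by blast
  have "lambda_max A \<in> eigvals A" using lmax[OF sym] by blast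
  then obtain u where u: "u \<noteq> 0" "A *v u = lambda_max A *\<^sub>R u" unfolding eigvals_def by blast
  have "u \<bullet> (A *v u) > 0" using assms u unfolding sym_pd_def by blast
  then have "lambda_max A * (u \<bullet> u) > 0" using u by simp
  moreover have "u \<bullet> u > 0" using u by simp
  ultimately show ?thesis by (simp add: zero_less_mult_iff)
qed

lemma lmin_pos:
  fixes A :: "real^'n^'n"
  assumes "sym_pd A"
  shows "lambda_min A > 0"
proof -
  have sym: "transpose A = A" using assms unfolding sym_pd_def by blast
  have "lambda_min A \<in> eigvals A" using lmin[OF sym] by blast
  then obtain u where u: "u \<noteq> 0" "A *v u = lambda_min A *\<^sub>R u" unfolding eigvals_def by blast
  have "u \<bullet> (A *v u) > 0" using assms u unfolding sym_pd_def by blast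
  then have "lambda_min A * (u \<bullet> u) > 0" using u by simp
  moreover have "u \<bullet> u > 0" using u by simp
  ultimately show ?thesis by (simp add: zero_less_mult_iff)
qed

lemma upper_bound:
  fixes A :: "real^'n^'n"
  assumes pd: "sym_pd A"
  shows "v \<bullet> v \<le> lambda_max A * (v \<bullet> (matrix_inv A *v v))"
proof -
  have sym: "transpose A = A" using pd unfolding sym_pd_def by blast
  define \<mu> where "\<mu> = lambda_max A"
  define w where "w = matrix_inv A *v v"
  have Aw: "A *v w = v" using pd_inv[OF pd] by (simp add: w_def)
  have mu: "\<mu> > 0" using lmax_pos[OF pd] by (simp add: \<mu>_def)
  have ray: "v \<bullet> (A *v v) \<le> \<mu> * (v \<bullet> v)" using lmax[OF sym] by (simp add: \<mu>_def)
  have psd: "z \<bullet> (A *v z) \<ge> 0" for z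
    using pd unfolding sym_pd_def by (cases "z = 0") (auto intro: less_imp_le)
  have s: "w \<bullet> (A *v v) = v \<bullet> (A *v w)" by (rule sym_inner[OF sym])
  have "0 \<le> (v + (-\<mu>) *\<^sub>R w) \<bullet> (A *v (v + (-\<mu>) *\<^sub>R w))" by (rule psd)
  also have "\<dots> = v \<bullet> (A *v v) - 2 * \<mu> * (v \<bullet> v) + \<mu>^2 * (w \<bullet> v)"
    unfolding quad_expand s Aw by simp
  finally have "\<mu> * (v \<bullet> v) \<le> \<mu> * (\<mu> * (w \<bullet> v))"
    using ray by (simp add: power2_eq_square algebra_simps)
  then have "v \<bullet> v \<le> \<mu> * (w \<bullet> v)" using mu by simp
  then show ?thesis by (simp add: \<mu>_def w_def inner_commute)
qed

lemma lower_bound: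
  fixes A :: "real^'n^'n"
  assumes pd: "sym_pd A"
  shows "lambda_min A * (v \<bullet> (matrix_inv A *v v)) \<le> v \<bullet> v"
proof -
  have sym: "transpose A = A" using pd unfolding sym_pd_def by blast
  define m where "m = lambda_min A"
  define u where "u = matrix_inv A *v v"
  have Au: "A *v u = v" using pd_inv[OF pd] by (simp add: u_def)
  have m: "m > 0" using lmin_pos[OF pd] by (simp add: m_def)
  have ray: "m * (u \<bullet> u) \<le> u \<bullet> v" using lmin[OF sym] Au by (metis m_def)
  have cs: "(u \<bullet> v)^2 \<le> (u \<bullet> u) * (v \<bullet> v)" by (rule Cauchy_Schwarz_ineq)
  have "m * (u \<bullet> v) \<le> v \<bullet> v"
  proof (cases "u \<bullet> v > 0")
    case False
    then have "m * (u \<bullet> v) \<le> 0" using m by (simp add: mult_nonneg_nonpos)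
    moreover have "0 \<le> v \<bullet> v" by simp
    ultimately show ?thesis by linarith
  next
    case True
    have "m * (u \<bullet> v)^2 \<le> m * ((u \<bullet> u) * (v \<bullet> v))" using cs m by simp
    also have "\<dots> = (m * (u \<bullet> u)) * (v \<bullet> v)" by simp
    also have "\<dots> \<le> (u \<bullet> v) * (v \<bullet> v)" using ray by (simp add: mult_right_mono)
    finally have "(u \<bullet> v) * (m * (u \<bullet> v)) \<le> (u \<bullet> v) * (v \<bullet> v)"
      by (simp add: power2_eq_square algebra_simps)
    then show ?thesis using True by simp
  qed
  then show ?thesis by (simp add: m_def u_def inner_commute)
qed

lemma sum_quad:
  fixes M :: "nat \<Rightarrow> real^'n^'n"
  shows "x \<bullet> ((\<Sum>i\<in>I. c i *\<^sub>R M i) *v x) = (\<Sum>i\<in>I. c i * (x \<bullet> (M i *v x)))"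
proof (induction I rule: infinite_finite_induct)
  case (infinite I) then show ?case by simp
next
  case empty then show ?case by (simp add: matrix_vector_mult_def inner_vec_def)
next
  case (insert i I)
  then show ?case
    by (simp add: matrix_vector_mult_add_rdistrib inner_add_right scaleR_matrix_vector_assoc[symmetric])
qed


lemma sum_norm_sq:
  fixes g :: "nat \<Rightarrow> real^'d"
  assumes "n \<ge> 1"
  shows "((1 / real n) *\<^sub>R (\<Sum>i<n. g i)) \<bullet> ((1 / real n) *\<^sub>R (\<Sum>i<n. g i))
         \<le> (1 / real n) * (\<Sum>i<n. g i \<bullet> g i)"
proof -
  have n0: "real n > 0" using assms by simp
  have "((1 / real n) *\<^sub>R (\<Sum>i<n. g i)) \<bullet> ((1 / real n) *\<^sub>R (\<Sum>i<n. g i))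
        = (1 / real n)^2 * (norm (\<Sum>i<n. g i))^2"
    by (simp add: power2_norm_eq_inner[symmetric] power2_eq_square)
  also have "(norm (\<Sum>i<n. g i))^2 \<le> (\<Sum>i<n. norm (g i))^2"
    by (intro power_mono norm_sum) auto
  also have "(\<Sum>i<n. norm (g i))^2 \<le> (\<Sum>i<n. (norm (g i))^2) * real n"
    using sum_squared_le_sum_of_squares[of "\<lambda>i. norm (g i)" "{..<n}"] by simp
  finally have "((1 / real n) *\<^sub>R (\<Sum>i<n. g i)) \<bullet> ((1 / real n) *\<^sub>R (\<Sum>i<n. g i))
        \<le> (1 / real n)^2 * ((\<Sum>i<n. (norm (g i))^2) * real n)"
    by (simp add: mult_left_mono)
  also have "\<dots> = (1 / real n) * (\<Sum>i<n. g i \<bullet> g i)"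
  proof -
    have sq: "(\<Sum>i<n. (norm (g i))^2) = (\<Sum>i<n. g i \<bullet> g i)" by (simp add: power2_norm_eq_inner)
    show ?thesis unfolding sq using n0 by (simp add: power2_eq_square)
  qed
  finally show ?thesis .
qed

theorem mainTheorem7:
  fixes fs :: "nat \<Rightarrow> real^'d \<Rightarrow> real"
    and Ls :: "nat \<Rightarrow> real^'d^'d"
    and L :: "real^'d^'d"
    and n :: nat
  assumes "n \<ge> 1"
    and "\<And>i. i < n \<Longrightarrow> cont_diff1 (fs i)"
    and "\<And>i. i < n \<Longrightarrow> sym_pd (Ls i)"
    and "\<And>i. i < n \<Longrightarrow> lipschitz_gradient (Ls i) (fs i)"
    and "sym_pd L"
    and "lambda_min L *\<^sub>R L = (1 / real n) *\<^sub>R (\<Sum>i<n. lambda_max (Ls i) *\<^sub>R Ls i)"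
  shows "lipschitz_gradient L (\<lambda>x. (1 / real n) * (\<Sum>i<n. fs i x))"
proof -
  note n1 = assms(1) and pdi = assms(3) and lip = assms(4) and pdL = assms(5) and hyp = assms(6)
  have "\<forall>i. \<exists>G. i < n \<longrightarrow> ((\<forall>x. (fs i has_derivative (\<lambda>h. G x \<bullet> h)) (at x)) \<and>
      (\<forall>x y. mnorm (matrix_inv (Ls i)) (G x - G y) \<le> mnorm (Ls i) (x - y)))"
    using lip unfolding lipschitz_gradient_def by blast
  then obtain GG where GG: "\<And>i. i < n \<Longrightarrow> (\<forall>x. (fs i has_derivative (\<lambda>h. GG i x \<bullet> h)) (at x)) \<and>
      (\<forall>x y. mnorm (matrix_inv (Ls i)) (GG i x - GG i y) \<le> mnorm (Ls i) (x - y))"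
    by metis
  define Gf where "Gf x = (1 / real n) *\<^sub>R (\<Sum>i<n. GG i x)" for x
  have deriv: "((\<lambda>x. (1 / real n) * (\<Sum>i<n. fs i x)) has_derivative (\<lambda>h. Gf x \<bullet> h)) (at x)" for x
  proof -
    have "((\<lambda>x. \<Sum>i<n. fs i x) has_derivative (\<lambda>h. \<Sum>i<n. GG i x \<bullet> h)) (at x)"
      using GG by (intro has_derivative_sum) auto
    then have "((\<lambda>x. (1 / real n) * (\<Sum>i<n. fs i x)) has_derivative (\<lambda>h. (1 / real n) * (\<Sum>i<n. GG i x \<bullet> h))) (at x)"
      by (rule has_derivative_mult_right)
    moreover have "(\<lambda>h. (1 / real n) * (\<Sum>i<n. GG i x \<bullet> h)) = (\<lambda>h. Gf x \<bullet> h)"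
      by (simp add: Gf_def inner_sum_left)
    ultimately show ?thesis by simp
  qed
  have bound: "mnorm (matrix_inv L) (Gf x - Gf y) \<le> mnorm L (x - y)" for x y
  proof -
    define D where "D = x - y"
    define g where "g i = GG i x - GG i y" for i
    define m where "m = lambda_min L"
    have m0: "m > 0" using lmin_pos[OF pdL] by (simp add: m_def)
    have gdef: "Gf x - Gf y = (1 / real n) *\<^sub>R (\<Sum>i<n. g i)"
      by (simp add: Gf_def g_def sum_subtractf scaleR_diff_right)
    have li: "g i \<bullet> (matrix_inv (Ls i) *v g i) \<le> D \<bullet> (Ls i *v D)" if "i < n" for i
      using GG[OF that] unfolding mnorm_def g_def D_def by auto
    have gi: "g i \<bullet> g i \<le> lambda_max (Ls i) * (D \<bullet> (Ls i *v D))" if "i < n" for i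
    proof -
      have "g i \<bullet> g i \<le> lambda_max (Ls i) * (g i \<bullet> (matrix_inv (Ls i) *v g i))"
        by (rule upper_bound[OF pdi[OF that]])
      also have "\<dots> \<le> lambda_max (Ls i) * (D \<bullet> (Ls i *v D))"
        using li[OF that] lmax_pos[OF pdi[OF that]] by (simp add: mult_left_mono)
      finally show ?thesis .
    qed
    define G where "G = (1 / real n) *\<^sub>R (\<Sum>i<n. g i)"
    have "G \<bullet> G \<le> (1 / real n) * (\<Sum>i<n. g i \<bullet> g i)"
      unfolding G_def by (rule sum_norm_sq[OF n1])
    also have "\<dots> \<le> (1 / real n) * (\<Sum>i<n. lambda_max (Ls i) * (D \<bullet> (Ls i *v D)))"
      using gi by (intro mult_left_mono sum_mono) auto
    also have "\<dots> = D \<bullet> ((lambda_min L *\<^sub>R L) *v D)"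
      unfolding hyp by (simp add: scaleR_matrix_vector_assoc[symmetric] sum_quad)
    also have "\<dots> = m * (D \<bullet> (L *v D))" by (simp add: m_def scaleR_matrix_vector_assoc[symmetric])
    finally have GG1: "G \<bullet> G \<le> m * (D \<bullet> (L *v D))" .
    have "m * (G \<bullet> (matrix_inv L *v G)) \<le> G \<bullet> G" unfolding m_def by (rule lower_bound[OF pdL])
    with GG1 have "m * (G \<bullet> (matrix_inv L *v G)) \<le> m * (D \<bullet> (L *v D))" by linarith
    then have "G \<bullet> (matrix_inv L *v G) \<le> D \<bullet> (L *v D)" using m0 by simp
    then show ?thesis unfolding mnorm_def gdef G_def[symmetric] D_def[symmetric] by simp
  qed
  show ?thesis unfolding lipschitz_gradient_def using deriv bound by blast
qed

end
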